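(* Let $k$ be an algebraically closed field of characteristic $0$ and $d\ge3$. For $m\ge1$ let $V_m$ have basis $v_1,\dots,v_m$ and symmetric $d$-linear form $\Theta_d(v_{i_1},\dots,v_{i_d})=1$ if $i_1+\dots+i_d=(d-1)m+1$ and $0$ otherwise, and $\mathcal{L}(m,d)=\{L\in\mathfrak{gl}(V_m):\sum_{i=1}^d\Theta_d(u_1,\dots,L(u_i),\dots,u_d)=0\ \forall u_j\}$. Fix $n\ge1$, let $\psi\in\mathrm{End}_k(V_n)$, $\psi(v_i)=v_{i-1}$ ($v_0=0$), and let $\mathcal{L}(n,d)^\psi$ be $\mathcal{L}(n,d)$ with Lie bracket $[f,g]_\psi=f\psi g-g\psi f$. Let $\iota:V_n\to V_{n+1}$, $\iota(v_i)=v_i$, and $\pi:V_{n+1}\to V_n$, $\pi(v_i)=v_{i-1}$ ($v_0=0$). Then $\rho(f)=\iota\circ f\circ\pi$ defines an injective Lie algebra homomorphism $\rho:\mathcal{L}(n,d)^\psi\to\mathcal{L}(n+1,d)$, where $\mathcal{L}(n+1,d)$ carries the commutator bracket.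
   Context: $\psi$ lies in the center of $(V_n,\Theta_d)$, so $[\cdot,\cdot]_\psi$ is a Lie bracket on $\mathcal{L}(n,d)$. *)

theory Defs
  imports "HOL-Computational_Algebra.Polynomial" "Jordan_Normal_Form.Matrix"
begin

text \<open>V_m is modelled as k^m (type 'k vec of dimension m); basis vector v_i (1 \<le> i \<le> m)
  is unit_vec m (i - 1), i.e. 0-based index i - 1. Endomorphisms of V_m are m x m matrices
  (column j-1 = image of v_j).\<close>

text \<open>The symmetric d-linear form Theta_d on V_m, as the multilinear extension of its values
  on basis vectors: Theta_d(v_{i_1},...,v_{i_d}) = 1 iff i_1+...+i_d = (d-1)m+1.
  The arguments are us 0, ..., us (d-1).\<close>
definition Theta :: "nat \<Rightarrow> nat \<Rightarrow> (nat \<Rightarrow> 'k::comm_ring_1 vec) \<Rightarrow> 'k" where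
  "Theta m d us =
     (\<Sum>idx \<in> PiE {..<d} (\<lambda>_. {..<m}).
        (if (\<Sum>j<d. idx j + 1) = (d - 1) * m + 1 then 1 else 0) * (\<Prod>j<d. us j $ idx j))"

definition Lmd :: "nat \<Rightarrow> nat \<Rightarrow> 'k::comm_ring_1 mat set" where
  "Lmd m d = {L \<in> carrier_mat m m.
     \<forall>us. (\<forall>j<d. us j \<in> carrier_vec m) \<longrightarrow>
          (\<Sum>i<d. Theta m d (us(i := L *\<^sub>v us i))) = 0}"

definition psi :: "nat \<Rightarrow> 'k::comm_ring_1 mat" where
  "psi n = mat n n (\<lambda>(i, j). if j = i + 1 then 1 else 0)"

definition iota :: "nat \<Rightarrow> 'k::comm_ring_1 mat" where
  "iota n = mat (n + 1) n (\<lambda>(i, j). if i = j then 1 else 0)"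

definition proj :: "nat \<Rightarrow> 'k::comm_ring_1 mat" where
  "proj n = mat n (n + 1) (\<lambda>(i, j). if j = i + 1 then 1 else 0)"

definition bracket_psi :: "nat \<Rightarrow> 'k::comm_ring_1 mat \<Rightarrow> 'k mat \<Rightarrow> 'k mat" where
  "bracket_psi n f g = f * psi n * g - g * psi n * f"

definition commutator :: "'k::comm_ring_1 mat \<Rightarrow> 'k mat \<Rightarrow> 'k mat" where
  "commutator f g = f * g - g * f"

definition rho :: "nat \<Rightarrow> 'k::comm_ring_1 mat \<Rightarrow> 'k mat" where
  "rho n f = iota n * f * proj n"

end

theory Submission
  imports Defs
begin

lemma iota_vec: assumes "w \<in> carrier_vec n" "a < n+1"
  shows "(iota n *\<^sub>v w) $ a = (if a < n then w $ a else (0::'k::comm_ring_1))"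
  using assms unfolding iota_def
  by (auto simp: mult_mat_vec_def scalar_prod_def row_def if_distrib[of "\<lambda>x. x * _"] cong: if_cong)

lemma proj_vec: assumes "u \<in> carrier_vec (n+1)" "b < n"
  shows "(proj n *\<^sub>v u) $ b = (u $ (b+1) :: 'k::comm_ring_1)"
  using assms unfolding proj_def
  by (auto simp: mult_mat_vec_def scalar_prod_def row_def if_distrib[of "\<lambda>x. x * _"] cong: if_cong)

lemma proj_iota: "proj n * iota n = (psi n :: 'k::comm_ring_1 mat)"
  unfolding proj_def iota_def psi_def
  by (rule eq_matI) (auto simp: scalar_prod_def row_def col_def if_distrib[of "\<lambda>x. x * _"] cong: if_cong)


lemma sum_h: assumes "i < d"
  shows "(\<Sum>j<d. (if j = i then x j else x j + 1) + 1) = (\<Sum>j<d. x j + 1) + (d - 1::nat)"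
proof -
  have "(\<Sum>j<d. (if j = i then x j else x j + 1) + 1) = (\<Sum>j<d. (x j + 1) + (if j = i then 0 else 1))"
    by (rule sum.cong) auto
  also have "\<dots> = (\<Sum>j<d. x j + 1) + (\<Sum>j<d. (if j = i then 0 else 1::nat))"
    by (simp only: sum.distrib)
  also have "(\<Sum>j<d. (if j = i then 0 else 1::nat)) = d - 1"
    using assms by (simp add: sum.If_cases Diff_eq[symmetric])
  finally show ?thesis .
qed

lemma sum_small: assumes "i < d" "j < d" "j \<noteq> i" "x i < n" "x j = 0" "\<forall>k<d. x k < n + 1"
  shows "(\<Sum>k<d. x k + 1) \<noteq> (d - 1) * (n + 1) + (1::nat)"
proof -
  have "(\<Sum>k<d. x k + 1) = (x i + 1) + (\<Sum>k\<in>{..<d} - {i}. x k + 1)"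
    using assms by (simp add: sum.remove)
  also have "(\<Sum>k\<in>{..<d} - {i}. x k + 1) = (x j + 1) + (\<Sum>k\<in>{..<d} - {i} - {j}. x k + 1)"
    using assms by (subst sum.remove[of _ j]) auto
  also have "(\<Sum>k\<in>{..<d} - {i} - {j}. x k + 1) \<le> card ({..<d} - {i} - {j}) * (n+1)"
    by (rule sum_bounded_above[where 'a=nat, simplified]) (use assms in auto)
  also have "card ({..<d} - {i} - {j}) = d - 2" using assms by simp
  finally have "(\<Sum>k<d. x k + 1) \<le> n + 1 + (d-2)*(n+1)" using assms by simp
  moreover have "n + 1 + (d-2)*(n+1) = (d-1)*(n+1)" proof -
    obtain e where "d = Suc (Suc e)" using assms
      by (metis Suc_lessE less_nat_zero_code nat_neq_iff old.nat.exhaust)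
    then show ?thesis by simp
  qed
  ultimately show ?thesis by linarith
qed


lemma theta_shift:
  fixes w :: "'k::comm_ring_1 vec"
  assumes w: "w \<in> carrier_vec n" and us: "\<forall>j<d. us j \<in> carrier_vec (n+1)" and i: "i < d"
  shows "Theta (n+1) d (us(i := iota n *\<^sub>v w)) = Theta n d ((\<lambda>j. proj n *\<^sub>v us j)(i := w))"
proof -
  define A where "A = PiE {..<d} (\<lambda>_. {..<n+1})"
  define B where "B = PiE {..<d} (\<lambda>_. {..<n})"
  define h where "h = (\<lambda>x::nat\<Rightarrow>nat. \<lambda>j. if j < d then (if j = i then x j else x j + 1) else undefined)"
  define F where "F = (\<lambda>idx. (if (\<Sum>j<d. idx j + 1) = (d - 1) * (n+1) + 1 then 1 else 0)
        * (\<Prod>j<d. (us(i := iota n *\<^sub>v w)) j $ idx j) :: 'k)"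
  define G where "G = (\<lambda>idx. (if (\<Sum>j<d. idx j + 1) = (d - 1) * n + 1 then 1 else 0)
        * (\<Prod>j<d. ((\<lambda>j. proj n *\<^sub>v us j)(i := w)) j $ idx j) :: 'k)"
  have "Theta (n+1) d (us(i := iota n *\<^sub>v w)) = sum F A" by (simp add: Theta_def F_def A_def)
  also have "\<dots> = sum F (h ` B)"
  proof (rule sum.mono_neutral_right)
    show "finite A" unfolding A_def by (simp add: finite_PiE)
    show "h ` B \<subseteq> A"
    proof
      fix z assume "z \<in> h ` B"
      then obtain y where y: "y \<in> B" and z: "z = h y" by blast
      have "\<forall>k<d. y k < n" using y unfolding B_def by (simp add: PiE_iff)
      then show "z \<in> A" unfolding z A_def PiE_iff extensional_def h_def by (simp; blast intro: less_SucI)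
    qed
    show "\<forall>x\<in>A - h ` B. F x = 0"
    proof
      fix x assume x: "x \<in> A - h ` B"
      then have xA: "x \<in> A" and xB: "x \<notin> h ` B" by auto
      have xr: "\<forall>k<d. x k < n + 1" using xA unfolding A_def by (simp add: PiE_iff)
      have xu: "\<And>k. k \<ge> d \<Longrightarrow> x k = undefined" using xA unfolding A_def
        by (simp add: PiE_iff extensional_def)
      show "F x = 0"
      proof (cases "x i < n")
        case False
        then have "x i = n" using xr i by force
        then have "(us(i := iota n *\<^sub>v w)) i $ x i = 0" using iota_vec[OF w, of n] by simp
        then have "(\<Prod>j<d. (us(i := iota n *\<^sub>v w)) j $ x j) = 0"
          using i by (intro prod_zero) auto
        then show ?thesis unfolding F_def by simp
      next
        case True
        have "\<exists>j<d. j \<noteq> i \<and> x j = 0"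
        proof (rule ccontr)
          assume "\<not> ?thesis"
          then have nz: "\<forall>j<d. j \<noteq> i \<longrightarrow> x j \<noteq> 0" by auto
          define y where "y = (\<lambda>j. if j < d then (if j = i then x j else x j - 1) else undefined)"
          have "y \<in> B" unfolding B_def y_def PiE_iff extensional_def using True xr by (simp; fastforce)
          moreover have "h y = x" unfolding h_def y_def using nz xu
            by (auto intro!: ext)
          ultimately show False using xB by blast
        qed
        then obtain j where j: "j < d" "j \<noteq> i" "x j = 0" by blast
        have "(\<Sum>k<d. x k + 1) \<noteq> (d - 1) * (n + 1) + 1"
          by (rule sum_small[OF i j(1) j(2) True j(3) xr])
        then show ?thesis unfolding F_def by simp
      qed
    qed
  qed
  also have "\<dots> = sum (F \<circ> h) B"
  proof (rule sum.reindex)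
    show "inj_on h B"
    proof
      fix x y assume xB: "x \<in> B" and yB: "y \<in> B" and e: "h x = h y"
      show "x = y"
      proof
        fix j
        show "x j = y j"
        proof (cases "j < d")
          case True
          then have "h x j = h y j" using e by simp
          with True show ?thesis unfolding h_def by (cases "j = i") simp_all
        next
          case False
          then show ?thesis using PiE_arb[OF xB[unfolded B_def], of j] PiE_arb[OF yB[unfolded B_def], of j] by simp
        qed
      qed
    qed
  qed
  also have "\<dots> = sum G B"
  proof (rule sum.cong)
    fix x assume "x \<in> B"
    then have xr: "\<forall>k<d. x k < n" unfolding B_def by (simp add: PiE_iff)
    have c: "(\<Sum>j<d. h x j + 1) = (\<Sum>j<d. x j + 1) + (d - 1)"
      using sum_h[OF i, of x] unfolding h_def by simp
    have c2: "((\<Sum>j<d. x j + 1) + (d - 1) = (d - 1) * (n+1) + 1) = ((\<Sum>j<d. x j + 1) = (d - 1) * n + 1)"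
    proof -
      have e: "(d - 1) * (n+1) = (d - 1) * n + (d - 1)" by (simp only: distrib_left mult_1_right)
      show ?thesis unfolding e by arith
    qed
    have p: "(\<Prod>j<d. (us(i := iota n *\<^sub>v w)) j $ h x j) = (\<Prod>j<d. ((\<lambda>j. proj n *\<^sub>v us j)(i := w)) j $ x j)"
    proof (rule prod.cong)
      fix j assume "j \<in> {..<d}"
      then have j: "j < d" by simp
      show "(us(i := iota n *\<^sub>v w)) j $ h x j = ((\<lambda>j. proj n *\<^sub>v us j)(i := w)) j $ x j"
      proof (cases "j = i")
        case True
        have xi: "x i < n" using xr i by blast
        then have "x i < n + 1" by simp
        with True xi show ?thesis using iota_vec[OF w, of "x i"] j unfolding h_def by simp
      next
        case False
        have xj: "x j < n" using xr j by blast
        have "us j \<in> carrier_vec (n+1)" using us j by blast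
        with False xj show ?thesis using proj_vec[of "us j" n "x j"] j unfolding h_def by simp
      qed
    qed simp
    show "(F \<circ> h) x = G x" unfolding F_def G_def comp_def using c c2 p by simp
  qed simp
  also have "\<dots> = Theta n d ((\<lambda>j. proj n *\<^sub>v us j)(i := w))" by (simp add: Theta_def G_def B_def)
  finally show ?thesis .
qed


lemma rho_in:
  assumes f: "f \<in> (Lmd n d :: 'k::comm_ring_1 mat set)"
  shows "rho n f \<in> Lmd (n + 1) d"
proof -
  have fc: "f \<in> carrier_mat n n" and fL: "\<And>us. (\<forall>j<d. us j \<in> carrier_vec n) \<Longrightarrow>
          (\<Sum>i<d. Theta n d (us(i := f *\<^sub>v us i))) = 0" using f unfolding Lmd_def by auto
  have ic: "iota n \<in> carrier_mat (n+1) n" unfolding iota_def by simp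
  have pc: "proj n \<in> carrier_mat n (n+1)" unfolding proj_def by simp
  have rc: "rho n f \<in> carrier_mat (n+1) (n+1)" unfolding rho_def using mult_carrier_mat[OF mult_carrier_mat[OF ic fc] pc] .
  show ?thesis unfolding Lmd_def
  proof (intro CollectI conjI allI impI rc)
    fix us :: "nat \<Rightarrow> 'k vec" assume us: "\<forall>j<d. us j \<in> carrier_vec (n + 1)"
    define vs where "vs = (\<lambda>j. proj n *\<^sub>v us j)"
    have vs: "\<forall>j<d. vs j \<in> carrier_vec n" unfolding vs_def using mult_mat_vec_carrier[OF pc] us by auto
    have "(\<Sum>i<d. Theta (n + 1) d (us(i := rho n f *\<^sub>v us i))) = (\<Sum>i<d. Theta n d (vs(i := f *\<^sub>v vs i)))"
    proof (rule sum.cong)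
      fix i assume "i \<in> {..<d}"
      then have i: "i < d" by simp
      have e: "rho n f *\<^sub>v us i = iota n *\<^sub>v (f *\<^sub>v vs i)"
      proof -
        have u: "us i \<in> carrier_vec (n+1)" using us i by blast
        have "rho n f *\<^sub>v us i = (iota n * f) *\<^sub>v (proj n *\<^sub>v us i)"
          unfolding rho_def by (rule assoc_mult_mat_vec[OF mult_carrier_mat[OF ic fc] pc u])
        also have "\<dots> = iota n *\<^sub>v (f *\<^sub>v (proj n *\<^sub>v us i))"
          by (rule assoc_mult_mat_vec[OF ic fc mult_mat_vec_carrier[OF pc u]])
        finally show ?thesis unfolding vs_def .
      qed
      have w: "f *\<^sub>v vs i \<in> carrier_vec n" using mult_mat_vec_carrier[OF fc] vs i by blast
      show "Theta (n + 1) d (us(i := rho n f *\<^sub>v us i)) = Theta n d (vs(i := f *\<^sub>v vs i))"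
        unfolding e vs_def by (rule theta_shift[OF w[unfolded vs_def] us i])
    qed simp
    also have "\<dots> = 0" by (rule fL[OF vs])
    finally show "(\<Sum>i<d. Theta (n + 1) d (us(i := rho n f *\<^sub>v us i))) = 0" .
  qed
qed

lemma rho_entry:
  assumes f: "f \<in> carrier_mat n n" and ij: "i < n" "j < n"
  shows "rho n f $$ (i, j + 1) = (f $$ (i, j) :: 'k::comm_ring_1)"
proof -
  have ic: "iota n \<in> carrier_mat (n+1) n" unfolding iota_def by simp
  have pc: "proj n \<in> carrier_mat n (n+1)" unfolding proj_def by simp
  have ifc: "iota n * f \<in> carrier_mat (n+1) n" using mult_carrier_mat[OF ic f] .
  have "rho n f $$ (i, j+1) = row (iota n * f) i \<bullet> col (proj n) (j+1)"
    unfolding rho_def by (rule index_mult_mat(1)) (use ifc pc ij in \<open>auto simp: proj_def\<close>)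
  also have "col (proj n) (j+1) = unit_vec n j"
    unfolding proj_def using ij by (auto simp: unit_vec_def)
  also have "row (iota n * f) i = row f i"
    using ic f ij by (rule_tac eq_vecI) (auto simp: iota_def scalar_prod_def col_def if_distrib[of "\<lambda>x. x * _"] cong: if_cong)
  also have "row f i \<bullet> unit_vec n j = f $$ (i, j)" using f ij by simp
  finally show ?thesis .
qed

lemma key:
  assumes fc: "f \<in> carrier_mat n n" and gc: "g \<in> carrier_mat n n"
  shows "iota n * f * proj n * (iota n * g * proj n) = iota n * (f * psi n * g) * (proj n :: 'k::comm_ring_1 mat)"
proof -
  have ic: "iota n \<in> carrier_mat (n+1) n" unfolding iota_def by simp
  have pc: "proj n \<in> carrier_mat n (n+1)" unfolding proj_def by simp
  have psc: "psi n \<in> carrier_mat n n" unfolding psi_def by simp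
  have xf: "iota n * f \<in> carrier_mat (n+1) n" using mult_carrier_mat[OF ic fc] .
  have xfp: "iota n * f * proj n \<in> carrier_mat (n+1) (n+1)" using mult_carrier_mat[OF xf pc] .
  have xg: "iota n * g \<in> carrier_mat (n+1) n" using mult_carrier_mat[OF ic gc] .
  have fps: "f * psi n \<in> carrier_mat n n" using mult_carrier_mat[OF fc psc] .
  have xfpx: "iota n * f * proj n * iota n \<in> carrier_mat (n+1) n" using mult_carrier_mat[OF xfp ic] .
  have "iota n * f * proj n * (iota n * g * proj n) = iota n * f * proj n * (iota n * g) * proj n"
    by (rule assoc_mult_mat[symmetric, OF xfp xg pc])
  also have "iota n * f * proj n * (iota n * g) = iota n * f * proj n * iota n * g"
    by (rule assoc_mult_mat[symmetric, OF xfp ic gc])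
  also have "iota n * f * proj n * iota n = iota n * f * psi n"
    unfolding proj_iota[symmetric] by (rule assoc_mult_mat[OF xf pc ic])
  also have "iota n * f * psi n = iota n * (f * psi n)" by (rule assoc_mult_mat[OF ic fc psc])
  also have "iota n * (f * psi n) * g = iota n * (f * psi n * g)" by (rule assoc_mult_mat[OF ic fps gc])
  finally show ?thesis .
qed

theorem proposition3p8:
  fixes n d :: nat
  assumes "d \<ge> 3" and "n \<ge> 1"
  shows "(\<forall>f \<in> (Lmd n d :: 'k :: {alg_closed_field, field_char_0} mat set).
            rho n f \<in> Lmd (n + 1) d)
    \<and> (\<forall>f \<in> (Lmd n d :: 'k mat set). \<forall>g \<in> Lmd n d. \<forall>a b :: 'k.
          rho n (a \<cdot>\<^sub>m f + b \<cdot>\<^sub>m g) = a \<cdot>\<^sub>m rho n f + b \<cdot>\<^sub>m rho n g)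
    \<and> (\<forall>f \<in> (Lmd n d :: 'k mat set). \<forall>g \<in> Lmd n d.
          rho n (bracket_psi n f g) = commutator (rho n f) (rho n g))
    \<and> inj_on (rho n) (Lmd n d :: 'k mat set)"
proof -
  have ic: "iota n \<in> carrier_mat (n+1) n" unfolding iota_def by simp
  have pc: "proj n \<in> carrier_mat n (n+1)" unfolding proj_def by simp
  have psc: "psi n \<in> carrier_mat n n" unfolding psi_def by simp
  have car: "\<And>f. f \<in> (Lmd n d :: 'k mat set) \<Longrightarrow> f \<in> carrier_mat n n" unfolding Lmd_def by auto
  have P1: "\<forall>f \<in> (Lmd n d :: 'k mat set). rho n f \<in> Lmd (n + 1) d" using rho_in by blast
  have P2: "\<forall>f \<in> (Lmd n d :: 'k mat set). \<forall>g \<in> Lmd n d. \<forall>a b :: 'k.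
          rho n (a \<cdot>\<^sub>m f + b \<cdot>\<^sub>m g) = a \<cdot>\<^sub>m rho n f + b \<cdot>\<^sub>m rho n g"
  proof (intro ballI allI)
    fix f g :: "'k mat" and a b :: 'k assume f: "f \<in> Lmd n d" and g: "g \<in> Lmd n d"
    have fc: "f \<in> carrier_mat n n" and gc: "g \<in> carrier_mat n n" using car f g by auto
    have xf: "iota n * f \<in> carrier_mat (n+1) n" using mult_carrier_mat[OF ic fc] .
    have xg: "iota n * g \<in> carrier_mat (n+1) n" using mult_carrier_mat[OF ic gc] .
    have "iota n * (a \<cdot>\<^sub>m f + b \<cdot>\<^sub>m g) = a \<cdot>\<^sub>m (iota n * f) + b \<cdot>\<^sub>m (iota n * g)"
      using mult_add_distrib_mat[OF ic smult_carrier_mat[OF fc] smult_carrier_mat[OF gc]]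
        mult_smult_distrib[OF ic fc] mult_smult_distrib[OF ic gc] by simp
    moreover have "(a \<cdot>\<^sub>m (iota n * f) + b \<cdot>\<^sub>m (iota n * g)) * proj n = a \<cdot>\<^sub>m (iota n * f * proj n) + b \<cdot>\<^sub>m (iota n * g * proj n)"
      using add_mult_distrib_mat[OF smult_carrier_mat[OF xf] smult_carrier_mat[OF xg] pc]
        mult_smult_assoc_mat[OF xf pc] mult_smult_assoc_mat[OF xg pc] by simp
    ultimately show "rho n (a \<cdot>\<^sub>m f + b \<cdot>\<^sub>m g) = a \<cdot>\<^sub>m rho n f + b \<cdot>\<^sub>m rho n g"
      unfolding rho_def by simp
  qed
  have P3: "\<forall>f \<in> (Lmd n d :: 'k mat set). \<forall>g \<in> Lmd n d.
          rho n (bracket_psi n f g) = commutator (rho n f) (rho n g)"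
  proof (intro ballI)
    fix f g :: "'k mat" assume f: "f \<in> Lmd n d" and g: "g \<in> Lmd n d"
    have fc: "f \<in> carrier_mat n n" and gc: "g \<in> carrier_mat n n" using car f g by auto
    have c1: "f * psi n * g \<in> carrier_mat n n" using mult_carrier_mat[OF mult_carrier_mat[OF fc psc] gc] .
    have c2: "g * psi n * f \<in> carrier_mat n n" using mult_carrier_mat[OF mult_carrier_mat[OF gc psc] fc] .
    have "iota n * (f * psi n * g - g * psi n * f) = iota n * (f * psi n * g) - iota n * (g * psi n * f)"
      by (rule mult_minus_distrib_mat[OF ic c1 c2])
    moreover have "(iota n * (f * psi n * g) - iota n * (g * psi n * f)) * proj n = iota n * (f * psi n * g) * proj n - iota n * (g * psi n * f) * proj n"
      by (rule minus_mult_distrib_mat[OF mult_carrier_mat[OF ic c1] mult_carrier_mat[OF ic c2] pc])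
    ultimately show "rho n (bracket_psi n f g) = commutator (rho n f) (rho n g)"
      unfolding rho_def bracket_psi_def commutator_def key[OF fc gc] key[OF gc fc] by simp
  qed
  have P4: "inj_on (rho n) (Lmd n d :: 'k mat set)"
  proof
    fix f g :: "'k mat" assume f: "f \<in> Lmd n d" and g: "g \<in> Lmd n d" and e: "rho n f = rho n g"
    have fc: "f \<in> carrier_mat n n" and gc: "g \<in> carrier_mat n n" using car f g by auto
    show "f = g"
    proof (rule eq_matI)
      fix i j assume "i < dim_row g" "j < dim_col g"
      then have ij: "i < n" "j < n" using gc by auto
      show "f $$ (i, j) = g $$ (i, j)"
        using rho_entry[OF fc ij] rho_entry[OF gc ij] e by simp
    qed (use fc gc in auto)
  qed
  show ?thesis using P1 P2 P3 P4 by blast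
qed

end
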